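(* Let $r\ge2$ and $m\ge1$ be integers. Then (i) $P\left(-\frac{r-1}{r},-\frac{r-2}{r},\ldots,-\frac{r-m}{r}\right)\,S_m\!\left(r-\frac{t\varphi'(t)}{\varphi(t)}\right)\,Q\left(\frac{r-1}{r},\frac{r-2}{r},\ldots,\frac{r-m}{r}\right)=r\,\mathrm{I}_m$; (ii) $P\left(-\frac{r-1}{r},\ldots,-\frac{r-m}{r}\right)\,\mathrm{diag}(r-1,r-2,\ldots,r-m)\,Q\left(\frac{r-1}{r},\ldots,\frac{r-m}{r}\right)=\mathrm{diag}(r-1,r-2,\ldots,r-m)$.
   Context: $s_1,\dots,s_r$ are independent indeterminates over $\mathbb{Q}$ and $\varphi(t)=1+s_1t+\cdots+s_rt^r$. For $\lambda\in\mathbb{C}$ and $\ell\in\mathbb{Z}$, $\beta_\ell(\lambda)$ is the coefficient of $t^\ell$ in the power series $\varphi(t)^\lambda$ (so $\beta_0(\lambda)=1$, $\beta_\ell(\lambda)=0$ for $\ell<0$). For $\lambda_1,\dots,\lambda_m\in\mathbb{C}$, $P(\lambda_1,\ldots,\lambda_m)$ is the $m\times m$ matrix with $(i,j)$ entry $\beta_{i-j}(\lambda_i)$; for $\mu_1,\dots,\mu_m$, $Q(\mu_1,\ldots,\mu_m)$ is the $m\times m$ matrix with $(i,j)$ entry $\beta_{i-j}(\mu_j)$. For a power series $\psi(t)=a_0+a_1t+\cdots$, $S_m(\psi(t))$ is the $m\times m$ matrix with $(i,j)$ entry $a_{i-j}$ (with $a_i=0$ for $i<0$). $\mathrm{I}_m$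 is the identity matrix. *)

theory Defs
  imports "HOL-Computational_Algebra.Formal_Power_Series" "Jordan_Normal_Form.Matrix"
begin

definition phi_fps :: "(nat \<Rightarrow> 'a::field_char_0) \<Rightarrow> nat \<Rightarrow> 'a fps" where
  "phi_fps s r = 1 + (\<Sum>i=1..r. fps_const (s i) * fps_X ^ i)"

text \<open>phi(t)^lambda = (1+X)^lambda composed with phi - 1 (which has zero constant term).\<close>
definition phi_pow :: "(nat \<Rightarrow> 'a::field_char_0) \<Rightarrow> nat \<Rightarrow> 'a \<Rightarrow> 'a fps" where
  "phi_pow s r lam = fps_binomial lam oo (phi_fps s r - 1)"

definition beta :: "(nat \<Rightarrow> 'a::field_char_0) \<Rightarrow> nat \<Rightarrow> 'a \<Rightarrow> int \<Rightarrow> 'a" where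
  "beta s r lam l = (if l < 0 then 0 else fps_nth (phi_pow s r lam) (nat l))"

text \<open>Matrices with 0-based indices: entry (i,j) is beta_{i-j}(lambda_i), lambda given as a function
  of the 0-based row index.\<close>
definition P_mat :: "(nat \<Rightarrow> 'a::field_char_0) \<Rightarrow> nat \<Rightarrow> (nat \<Rightarrow> 'a) \<Rightarrow> nat \<Rightarrow> 'a mat" where
  "P_mat s r lam m = mat m m (\<lambda>(i,j). beta s r (lam i) (int i - int j))"

definition Q_mat :: "(nat \<Rightarrow> 'a::field_char_0) \<Rightarrow> nat \<Rightarrow> (nat \<Rightarrow> 'a) \<Rightarrow> nat \<Rightarrow> 'a mat" where
  "Q_mat s r mu m = mat m m (\<lambda>(i,j). beta s r (mu j) (int i - int j))"

definition S_mat :: "nat \<Rightarrow> 'a::zero fps \<Rightarrow> 'a mat" where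
  "S_mat m psi = mat m m (\<lambda>(i,j). if j \<le> i then fps_nth psi (i - j) else 0)"

end

theory Submission
  imports Defs
begin

lemma phi0: "fps_nth (phi_fps s r) 0 = 1"
  by (simp add: phi_fps_def fps_sum_nth)

lemma G0: "fps_nth (phi_fps s r - 1) 0 = 0"
  by (simp add: phi0)

lemma pw_add: "phi_pow s r (a + b) = phi_pow s r a * phi_pow s r b"
  unfolding phi_pow_def fps_binomial_add_mult
  by (rule fps_compose_mult_distrib[OF G0])

lemma pw_0: "phi_pow s r 0 = 1"
  by (simp add: phi_pow_def)

lemma pw_1: "phi_pow s r 1 = phi_fps s r"
  by (simp add: phi_pow_def fps_binomial_1 fps_compose_add_distrib fps_X_fps_compose_startby0[OF G0])

lemma pw_nth0: "fps_nth (phi_pow s r a) 0 = 1"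
  by (simp add: phi_pow_def)

lemma pw_inv: "phi_fps s r * phi_pow s r (-1) = 1"
proof -
  have "phi_fps s r * phi_pow s r (-1) = phi_pow s r (1 + (-1))" by (simp only: pw_add pw_1)
  thus ?thesis by (simp add: pw_0)
qed

lemma binom_ode: "(1 + fps_X) * fps_deriv (fps_binomial c) = fps_const (c::'a::field_char_0) * fps_binomial c"
proof -
  have u: "fps_nth (1 + fps_X :: 'a fps) 0 \<noteq> 0" by simp
  show ?thesis unfolding fps_binomial_deriv fps_divide_unit[OF u]
  proof -
    have "(1 + fps_X) * (fps_const c * fps_binomial c * inverse (1 + fps_X))
       = fps_const c * fps_binomial c * ((1 + fps_X) * inverse (1 + fps_X))"
      by (simp only: mult.commute mult.left_commute)
    also have "\<dots> = fps_const c * fps_binomial c" by (simp only: inverse_mult_eq_1'[OF u] mult_1_right)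
    finally show "(1 + fps_X) * (fps_const c * fps_binomial c * inverse (1 + fps_X)) = fps_const c * fps_binomial c" .
  qed
qed

lemma pw_ode: "phi_fps s r * fps_deriv (phi_pow s r a) = fps_const a * phi_pow s r a * fps_deriv (phi_fps s r)"
proof -
  let ?G = "phi_fps s r - 1"
  have "fps_deriv (phi_pow s r a) = (fps_deriv (fps_binomial a) oo ?G) * fps_deriv (phi_fps s r)"
    unfolding phi_pow_def by (simp add: fps_compose_deriv[OF G0])
  moreover have "phi_fps s r = (1 + fps_X) oo ?G"
    by (simp add: fps_compose_add_distrib fps_X_fps_compose_startby0[OF G0])
  ultimately have "phi_fps s r * fps_deriv (phi_pow s r a) = (((1 + fps_X) * fps_deriv (fps_binomial a)) oo ?G) * fps_deriv (phi_fps s r)"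
    by (simp add: fps_compose_mult_distrib[OF G0] mult.assoc)
  also have "\<dots> = fps_const a * phi_pow s r a * fps_deriv (phi_fps s r)"
    unfolding binom_ode by (simp add: fps_compose_mult_distrib[OF G0] phi_pow_def)
  finally show ?thesis .
qed

lemma pw_deriv: "fps_deriv (phi_pow s r a) = fps_const a * phi_pow s r a * fps_deriv (phi_fps s r) * phi_pow s r (-1)"
proof -
  have "fps_deriv (phi_pow s r a) = (phi_fps s r * phi_pow s r (-1)) * fps_deriv (phi_pow s r a)"
    by (simp add: pw_inv)
  also have "\<dots> = (phi_fps s r * fps_deriv (phi_pow s r a)) * phi_pow s r (-1)"
    by (simp add: algebra_simps)
  finally show ?thesis by (simp add: pw_ode)
qed

lemma keyC:
  assumes "n > 0" "r > 0"
  shows "fps_nth (phi_pow s r (of_nat n / of_nat r) * (fps_X * fps_deriv (phi_fps s r) * phi_pow s r (-1))) n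
     = of_nat r * fps_nth (phi_pow s r (of_nat n / of_nat r)) n"
proof -
  define h where "h = phi_pow s r (of_nat n / of_nat r)"
  define Y where "Y = fps_deriv (phi_fps s r) * phi_pow s r (-1)"
  define c where "c = fps_nth (h * Y) (n - 1)"
  have e1: "h * (fps_X * fps_deriv (phi_fps s r) * phi_pow s r (-1)) = fps_X * (h * Y)"
    unfolding Y_def by (simp only: mult.assoc mult.left_commute)
  have "fps_deriv h = fps_const (of_nat n / of_nat r) * (h * Y)"
    unfolding h_def Y_def pw_deriv by (simp only: mult.assoc)
  hence "fps_nth (fps_deriv h) (n - 1) = (of_nat n / of_nat r) * c" unfolding c_def by simp
  moreover have "fps_nth (fps_deriv h) (n - 1) = of_nat n * fps_nth h n" using assms by simp
  ultimately have "(of_nat n / of_nat r) * c = of_nat n * fps_nth h n" by simp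
  hence "c = of_nat r * fps_nth h n" using assms by (simp add: field_simps)
  moreover have "fps_nth (fps_X * (h * Y)) n = c" unfolding c_def using assms by simp
  ultimately have "fps_nth (h * (fps_X * fps_deriv (phi_fps s r) * phi_pow s r (-1))) n = of_nat r * fps_nth h n"
    by (simp only: e1)
  thus ?thesis by (simp only: h_def)
qed

lemma keyA:
  assumes "r > 0"
  shows "fps_nth (phi_pow s r (of_nat n / of_nat r) * (fps_const (of_nat r) - fps_X * fps_deriv (phi_fps s r) / phi_fps s r)) n
     = (if n = 0 then of_nat r else 0)"
proof -
  have d: "fps_X * fps_deriv (phi_fps s r) / phi_fps s r = fps_X * fps_deriv (phi_fps s r) * phi_pow s r (-1)"
  proof -
    have a: "fps_X * fps_deriv (phi_fps s r) / phi_fps s r = fps_X * fps_deriv (phi_fps s r) * inverse (phi_fps s r)"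
      by (rule fps_divide_unit) (simp add: phi0)
    show ?thesis by (simp only: a fps_inverse_unique[OF pw_inv])
  qed
  show ?thesis
  proof (cases "n = 0")
    case True thus ?thesis by (simp add: pw_nth0 d)
  next
    case False
    thus ?thesis unfolding d ring_distribs using keyC[of n r s] assms
      by (simp add: fps_mult_right_const_nth mult.commute)
  qed
qed

lemma keyB:
  assumes "r > 0" and ab: "a + b = of_nat n / of_nat r"
  shows "fps_nth (phi_pow s r a * (fps_const (of_nat r * b) * phi_pow s r b - fps_X * fps_deriv (phi_pow s r b))) n
     = (if n = 0 then of_nat r * b else 0)"
proof -
  define h where "h = phi_pow s r (of_nat n / of_nat r)"
  have hab: "phi_pow s r a * phi_pow s r b = h" unfolding h_def ab[symmetric] pw_add ..
  have e: "phi_pow s r a * (fps_const (of_nat r * b) * phi_pow s r b - fps_X * fps_deriv (phi_pow s r b))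
     = fps_const (of_nat r * b) * h - fps_const b * (h * (fps_X * fps_deriv (phi_fps s r) * phi_pow s r (-1)))"
    unfolding pw_deriv hab[symmetric] by (simp add: algebra_simps)
  show ?thesis
  proof (cases "n = 0")
    case True thus ?thesis unfolding e by (simp add: h_def pw_nth0)
  next
    case False
    hence "fps_nth (h * (fps_X * fps_deriv (phi_fps s r) * phi_pow s r (-1))) n = of_nat r * fps_nth h n"
      unfolding h_def using keyC[of n r s] assms by simp
    hence "fps_nth (fps_const (of_nat r * b) * h - fps_const b * (h * (fps_X * fps_deriv (phi_fps s r) * phi_pow s r (-1)))) n = 0"
      by (simp only: fps_sub_nth fps_mult_left_const_nth) (simp add: algebra_simps)
    thus ?thesis unfolding e using False by simp
  qed
qed

lemma ptw: "fps_nth (fps_const c * (g::'a::comm_ring_1 fps) - fps_X * fps_deriv g) p = (c - of_nat p) * fps_nth g p"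
  by (cases p) (simp_all add: algebra_simps)

lemma conv:
  assumes "i < m"
  shows "(\<Sum>j<m. (if j \<le> i then fps_nth f (i - j) else 0) * (if k \<le> j then fps_nth g (j - k) else 0))
     = (if k \<le> i then fps_nth (f * g) (i - k) else (0::'a::comm_ring_1))"
proof (cases "k \<le> i")
  case False
  have "(\<Sum>j<m. (if j \<le> i then fps_nth f (i - j) else 0) * (if k \<le> j then fps_nth g (j - k) else 0)) = 0"
    by (intro sum.neutral ballI) (use False in auto)
  thus ?thesis using False by simp
next
  case True
  have "(\<Sum>j<m. (if j \<le> i then fps_nth f (i - j) else 0) * (if k \<le> j then fps_nth g (j - k) else 0))
      = (\<Sum>j\<in>{k..i}. fps_nth f (i - j) * fps_nth g (j - k))"
    using assms by (intro sum.mono_neutral_cong_right) auto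
  also have "\<dots> = (\<Sum>p\<in>{0..i-k}. fps_nth f (i - (p + k)) * fps_nth g p)"
    using True sum.shift_bounds_cl_nat_ivl[of "\<lambda>j. fps_nth f (i - j) * fps_nth g (j - k)" 0 k "i - k"] by simp
  also have "\<dots> = fps_nth (g * f) (i - k)"
    unfolding fps_mult_nth by (intro sum.cong) (auto simp: mult.commute add.commute)
  finally show ?thesis using True by (simp add: mult.commute)
qed

lemma beta_eq: "beta s r lam (int i - int j) = (if j \<le> i then fps_nth (phi_pow s r lam) (i - j) else 0)"
  unfolding beta_def by (auto simp: nat_diff_distrib)

definition LT :: "nat \<Rightarrow> (nat \<Rightarrow> 'a::comm_ring_1 fps) \<Rightarrow> 'a mat" where
  "LT m F = mat m m (\<lambda>(i,j). if j \<le> i then fps_nth (F i) (i - j) else 0)"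

definition LTc :: "nat \<Rightarrow> (nat \<Rightarrow> 'a::comm_ring_1 fps) \<Rightarrow> 'a mat" where
  "LTc m F = mat m m (\<lambda>(i,j). if j \<le> i then fps_nth (F j) (i - j) else 0)"

lemma mult_entry:
  assumes "A \<in> carrier_mat m m" "B \<in> carrier_mat m m" "i < m" "k < m"
  shows "(A * B) $$ (i,k) = (\<Sum>j<m. A $$ (i,j) * B $$ (j,k))"
  using assms by (simp add: index_mult_mat scalar_prod_def lessThan_atLeast0)

lemma prod2:
  assumes "i < m" "k < m"
  shows "(LT m F * LTc m G) $$ (i,k) = (if k \<le> i then fps_nth (F i * G k) (i - k) else 0)"
proof -
  have "(LT m F * LTc m G) $$ (i,k) = (\<Sum>j<m. (LT m F) $$ (i,j) * (LTc m G) $$ (j,k))"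
    using assms by (intro mult_entry) (auto simp: LT_def LTc_def)
  also have "\<dots> = (\<Sum>j<m. (if j \<le> i then fps_nth (F i) (i - j) else 0) * (if k \<le> j then fps_nth (G k) (j - k) else 0))"
    using assms by (intro sum.cong) (auto simp: LT_def LTc_def)
  also have "\<dots> = (if k \<le> i then fps_nth (F i * G k) (i - k) else 0)"
    by (rule conv[OF assms(1)])
  finally show ?thesis .
qed

lemma prod3:
  assumes "i < m" "k < m"
  shows "(LT m F * LTc m (\<lambda>_. M) * LTc m G) $$ (i,k) = (if k \<le> i then fps_nth (F i * M * G k) (i - k) else 0)"
proof -
  have c1: "LT m F * LTc m (\<lambda>_. M) = LT m (\<lambda>i. F i * M)"
  proof (rule eq_matI)
    fix i j assume "i < dim_row (LT m (\<lambda>i. F i * M))" "j < dim_col (LT m (\<lambda>i. F i * M))"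
    hence ij: "i < m" "j < m" by (simp_all add: LT_def)
    show "(LT m F * LTc m (\<lambda>_. M)) $$ (i, j) = LT m (\<lambda>i. F i * M) $$ (i, j)"
      by (simp only: prod2[OF ij]) (simp add: LT_def ij)
  qed (auto simp: LT_def LTc_def)
  show ?thesis unfolding c1 prod2[OF assms] ..
qed

lemma diag_entry:
  assumes "A \<in> carrier_mat m m" "B \<in> carrier_mat m m" "i < m" "k < m"
  shows "(A * mat_diag m d * B) $$ (i,k) = (\<Sum>l<m. A $$ (i,l) * d l * B $$ (l,k))"
proof -
  have ad: "A * mat_diag m d \<in> carrier_mat m m" using assms by simp
  have e: "(A * mat_diag m d) $$ (i,l) = A $$ (i,l) * d l" if "l < m" for l
  proof -
    have "(A * mat_diag m d) $$ (i,l) = (\<Sum>j<m. A $$ (i,j) * mat_diag m d $$ (j,l))"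
      using assms that by (intro mult_entry) auto
    also have "\<dots> = (\<Sum>j<m. if j = l then A $$ (i,l) * d l else 0)"
      using that by (intro sum.cong) (auto simp: mat_diag_def)
    also have "\<dots> = A $$ (i,l) * d l" using that by simp
    finally show ?thesis .
  qed
  show ?thesis using assms by (simp add: mult_entry[OF ad assms(2-4)] e)
qed

lemma P_LT: "P_mat s r lam m = LT m (\<lambda>i. phi_pow s r (lam i))"
  unfolding P_mat_def LT_def beta_eq ..

lemma Q_LTc: "Q_mat s r mu m = LTc m (\<lambda>j. phi_pow s r (mu j))"
  unfolding Q_mat_def LTc_def beta_eq ..

lemma S_LTc: "S_mat m M = LTc m (\<lambda>_. M)"
  unfolding S_mat_def LTc_def ..

lemma lam_mu:
  assumes "k \<le> i" "r > 0"
  shows "- (of_int (int r - int (i+1)) / of_nat r) + of_int (int r - int (k+1)) / of_nat r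
     = (of_nat (i - k) / of_nat r :: 'a::field_char_0)"
proof -
  have "int r - int (k+1) - (int r - int (i+1)) = int (i - k)" using assms by simp
  hence "of_int (int r - int (k+1)) - of_int (int r - int (i+1)) = (of_nat (i - k) :: 'a)"
    by (metis of_int_diff of_int_of_nat_eq)
  thus ?thesis by (simp add: diff_divide_distrib[symmetric] add_divide_distrib[symmetric])
qed

theorem lemma12:
  fixes s :: "nat \<Rightarrow> 'a::field_char_0" and r m :: nat
  assumes "r \<ge> 2" and "m \<ge> 1"
  shows "(P_mat s r (\<lambda>i. - (of_int (int r - int (i+1)) / of_nat r)) m
           * S_mat m (fps_const (of_nat r) - fps_X * fps_deriv (phi_fps s r) / phi_fps s r)
           * Q_mat s r (\<lambda>j. of_int (int r - int (j+1)) / of_nat r) m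
         = of_nat r \<cdot>\<^sub>m 1\<^sub>m m)
       \<and> (P_mat s r (\<lambda>i. - (of_int (int r - int (i+1)) / of_nat r)) m
           * mat_diag m (\<lambda>i. of_int (int r - int (i+1)))
           * Q_mat s r (\<lambda>j. of_int (int r - int (j+1)) / of_nat r) m
         = mat_diag m (\<lambda>i. (of_int (int r - int (i+1)) :: 'a)))"
proof
  have r0: "r > 0" using assms by simp
  define lam :: "nat \<Rightarrow> 'a" where "lam = (\<lambda>i. - (of_int (int r - int (i+1)) / of_nat r))"
  define mu :: "nat \<Rightarrow> 'a" where "mu = (\<lambda>j. of_int (int r - int (j+1)) / of_nat r)"
  define d :: "nat \<Rightarrow> 'a" where "d = (\<lambda>i. of_int (int r - int (i+1)))"
  define psi where "psi = fps_const (of_nat r) - fps_X * fps_deriv (phi_fps s r) / phi_fps s r"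
  have lm: "lam i + mu k = of_nat (i - k) / of_nat r" if "k \<le> i" for i k
    unfolding lam_def mu_def using lam_mu[OF that r0] .
  have rmu: "of_nat r * mu k = d k" for k unfolding mu_def d_def using r0 by simp
  show "P_mat s r lam m * S_mat m psi * Q_mat s r mu m = of_nat r \<cdot>\<^sub>m 1\<^sub>m m"
    unfolding lam_def[symmetric] mu_def[symmetric] psi_def[symmetric]
  proof (rule eq_matI)
    fix i k assume "i < dim_row (of_nat r \<cdot>\<^sub>m 1\<^sub>m m :: 'a mat)" "k < dim_col (of_nat r \<cdot>\<^sub>m 1\<^sub>m m :: 'a mat)"
    hence ik: "i < m" "k < m" by simp_all
    have "(P_mat s r lam m * S_mat m psi * Q_mat s r mu m) $$ (i,k)
       = (if k \<le> i then fps_nth (phi_pow s r (lam i) * psi * phi_pow s r (mu k)) (i - k) else 0)"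
      unfolding P_LT Q_LTc S_LTc by (rule prod3[OF ik])
    also have "\<dots> = (if i = k then of_nat r else 0)"
    proof (cases "k \<le> i")
      case True
      have e: "phi_pow s r (lam i) * psi * phi_pow s r (mu k) = phi_pow s r (of_nat (i - k) / of_nat r) * psi"
        unfolding lm[OF True, symmetric] pw_add by (simp only: mult.commute mult.left_commute)
      have "fps_nth (phi_pow s r (lam i) * psi * phi_pow s r (mu k)) (i - k) = (if i - k = 0 then of_nat r else 0)"
        unfolding e unfolding psi_def by (rule keyA[OF r0])
      thus ?thesis using True by auto
    qed auto
    finally show "(P_mat s r lam m * S_mat m psi * Q_mat s r mu m) $$ (i,k) = (of_nat r \<cdot>\<^sub>m 1\<^sub>m m :: 'a mat) $$ (i,k)"
      using ik by simp
  qed (auto simp: P_mat_def Q_mat_def)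
  show "P_mat s r lam m * mat_diag m d * Q_mat s r mu m = mat_diag m d"
    unfolding lam_def[symmetric] mu_def[symmetric] d_def[symmetric]
  proof (rule eq_matI)
    fix i k assume "i < dim_row (mat_diag m d)" "k < dim_col (mat_diag m d)"
    hence ik: "i < m" "k < m" by (simp_all add: mat_diag_def)
    define g where "g = phi_pow s r (mu k)"
    define g' where "g' = fps_const (of_nat r * mu k) * g - fps_X * fps_deriv g"
    have "(P_mat s r lam m * mat_diag m d * Q_mat s r mu m) $$ (i,k)
       = (\<Sum>l<m. P_mat s r lam m $$ (i,l) * d l * Q_mat s r mu m $$ (l,k))"
      by (rule diag_entry) (auto simp: P_mat_def Q_mat_def ik)
    also have "\<dots> = (\<Sum>l<m. (if l \<le> i then fps_nth (phi_pow s r (lam i)) (i - l) else 0)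
                           * (if k \<le> l then fps_nth g' (l - k) else 0))"
    proof (intro sum.cong refl)
      fix l assume "l \<in> {..<m}"
      hence l: "l < m" by simp
      have "k \<le> l \<Longrightarrow> fps_nth g' (l - k) = d l * fps_nth g (l - k)"
      proof -
        assume kl: "k \<le> l"
        have "fps_nth g' (l - k) = (of_nat r * mu k - of_nat (l - k)) * fps_nth g (l - k)"
          unfolding g'_def by (rule ptw)
        moreover have "of_nat r * mu k - of_nat (l - k) = d l"
        proof -
          have "int r - int (k+1) - int (l - k) = int r - int (l+1)" using kl by simp
          hence "(of_int (int r - int (k+1)) :: 'a) - of_nat (l - k) = of_int (int r - int (l+1))"
            by (metis of_int_diff of_int_of_nat_eq)
          thus ?thesis unfolding rmu d_def .
        qed
        ultimately show ?thesis by simp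
      qed
      thus "P_mat s r lam m $$ (i,l) * d l * Q_mat s r mu m $$ (l,k)
         = (if l \<le> i then fps_nth (phi_pow s r (lam i)) (i - l) else 0) * (if k \<le> l then fps_nth g' (l - k) else 0)"
        using ik l by (auto simp: P_mat_def Q_mat_def beta_eq g_def)
    qed
    also have "\<dots> = (if k \<le> i then fps_nth (phi_pow s r (lam i) * g') (i - k) else 0)"
      by (rule conv[OF ik(1)])
    also have "\<dots> = (if i = k then d k else 0)"
    proof (cases "k \<le> i")
      case True
      have "fps_nth (phi_pow s r (lam i) * g') (i - k) = (if i - k = 0 then of_nat r * mu k else 0)"
        unfolding g'_def g_def by (rule keyB[OF r0 lm[OF True]])
      thus ?thesis using True rmu by auto
    qed auto
    finally show "(P_mat s r lam m * mat_diag m d * Q_mat s r mu m) $$ (i,k) = mat_diag m d $$ (i,k)"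
      using ik by (simp add: mat_diag_def)
  qed (auto simp: P_mat_def Q_mat_def mat_diag_def)
qed

end
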